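(* Let $(G,\varphi)$ be a complex unit gain graph, let $u$ be a pendant vertex of $G$ with neighbour $v$, and let $G_0=G-\{u,v\}$. Then $r(G,\varphi)=2|V(G)|-2c(G)-2\alpha(G)$ if and only if $v$ does not lie on any cycle of $G$ and $r(G_0,\varphi)=2|V(G_0)|-2c(G_0)-2\alpha(G_0)$.
   Context: A complex unit gain graph $(G,\varphi)$ is a simple finite graph $G$ with a gain function $\varphi$ assigning to each oriented edge $e_{ij}$ a complex number of modulus $1$ with $\varphi(e_{ji})=\overline{\varphi(e_{ij})}$; its adjacency matrix has $(i,j)$-entry $\varphi(e_{ij})$ for adjacent $v_i,v_j$ and $0$ otherwise, and $r(G,\varphi)$ is its rank; induced subgraphs carry the restricted gain. $\alpha$ is the independence number and $c(G)=|E(G)|-|V(G)|+\omega(G)$ the cyclomatic number ($\omega$ = number of components). A pendant vertex is a vertex of degree $1$. *)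

theory Defs
  imports "HOL-Analysis.Analysis" "HOL-Library.Function_Algebras"
begin

definition cug_graph :: "'a set \<Rightarrow> ('a \<Rightarrow> 'a \<Rightarrow> bool) \<Rightarrow> ('a \<Rightarrow> 'a \<Rightarrow> complex) \<Rightarrow> bool" where
  "cug_graph V E phi \<longleftrightarrow> finite V \<and>
     (\<forall>x y. E x y \<longrightarrow> x \<in> V \<and> y \<in> V \<and> x \<noteq> y \<and> E y x) \<and>
     (\<forall>x y. E x y \<longrightarrow> cmod (phi x y) = 1 \<and> phi y x = cnj (phi x y))"

definition induced :: "('a \<Rightarrow> 'a \<Rightarrow> bool) \<Rightarrow> 'a set \<Rightarrow> 'a \<Rightarrow> 'a \<Rightarrow> bool" where
  "induced E W = (\<lambda>x y. E x y \<and> x \<in> W \<and> y \<in> W)"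

definition cscale :: "complex \<Rightarrow> ('a \<Rightarrow> complex) \<Rightarrow> ('a \<Rightarrow> complex)" where
  "cscale c f = (\<lambda>x. c * f x)"

interpretation fun_cvs: vector_space "cscale :: complex \<Rightarrow> ('a \<Rightarrow> complex) \<Rightarrow> _"
  by unfold_locales (auto simp: cscale_def fun_eq_iff algebra_simps)

definition adj :: "('a \<Rightarrow> 'a \<Rightarrow> bool) \<Rightarrow> ('a \<Rightarrow> 'a \<Rightarrow> complex) \<Rightarrow> 'a \<Rightarrow> 'a \<Rightarrow> complex" where
  "adj E phi i j = (if E i j then phi i j else 0)"

definition adj_row :: "'a set \<Rightarrow> ('a \<Rightarrow> 'a \<Rightarrow> bool) \<Rightarrow> ('a \<Rightarrow> 'a \<Rightarrow> complex) \<Rightarrow> 'a \<Rightarrow> 'a \<Rightarrow> complex" where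
  "adj_row V E phi i = (\<lambda>j. if j \<in> V then adj E phi i j else 0)"

text \<open>Rank of the adjacency matrix = dimension of the complex span of its rows.\<close>
definition gain_rank :: "'a set \<Rightarrow> ('a \<Rightarrow> 'a \<Rightarrow> bool) \<Rightarrow> ('a \<Rightarrow> 'a \<Rightarrow> complex) \<Rightarrow> nat" where
  "gain_rank V E phi = fun_cvs.dim (adj_row V E phi ` V)"

definition independent_set :: "'a set \<Rightarrow> ('a \<Rightarrow> 'a \<Rightarrow> bool) \<Rightarrow> 'a set \<Rightarrow> bool" where
  "independent_set V E S \<longleftrightarrow> S \<subseteq> V \<and> (\<forall>x\<in>S. \<forall>y\<in>S. \<not> E x y)"

definition indep_num :: "'a set \<Rightarrow> ('a \<Rightarrow> 'a \<Rightarrow> bool) \<Rightarrow> nat" where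
  "indep_num V E = Max {card S | S. independent_set V E S}"

definition edge_set :: "'a set \<Rightarrow> ('a \<Rightarrow> 'a \<Rightarrow> bool) \<Rightarrow> 'a set set" where
  "edge_set V E = {{x, y} | x y. x \<in> V \<and> y \<in> V \<and> E x y}"

definition num_components :: "'a set \<Rightarrow> ('a \<Rightarrow> 'a \<Rightarrow> bool) \<Rightarrow> nat" where
  "num_components V E =
     card (V // {(x, y). x \<in> V \<and> y \<in> V \<and> (induced E V)\<^sup>*\<^sup>* x y})"

definition cyclomatic :: "'a set \<Rightarrow> ('a \<Rightarrow> 'a \<Rightarrow> bool) \<Rightarrow> int" where
  "cyclomatic V E = int (card (edge_set V E)) - int (card V) + int (num_components V E)"

definition pendant :: "'a set \<Rightarrow> ('a \<Rightarrow> 'a \<Rightarrow> bool) \<Rightarrow> 'a \<Rightarrow> bool" where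
  "pendant V E u \<longleftrightarrow> u \<in> V \<and> card {w \<in> V. E u w} = 1"

definition is_cycle :: "'a set \<Rightarrow> ('a \<Rightarrow> 'a \<Rightarrow> bool) \<Rightarrow> 'a list \<Rightarrow> bool" where
  "is_cycle V E xs \<longleftrightarrow> length xs \<ge> 3 \<and> distinct xs \<and> set xs \<subseteq> V \<and>
     (\<forall>i. Suc i < length xs \<longrightarrow> E (xs ! i) (xs ! Suc i)) \<and> E (last xs) (hd xs)"

definition on_cycle :: "'a set \<Rightarrow> ('a \<Rightarrow> 'a \<Rightarrow> bool) \<Rightarrow> 'a \<Rightarrow> bool" where
  "on_cycle V E v \<longleftrightarrow> (\<exists>xs. is_cycle V E xs \<and> v \<in> set xs)"

end

theory Submission
  imports Defs
begin


definition sg :: "'a set \<Rightarrow> ('a \<Rightarrow> 'a \<Rightarrow> bool) \<Rightarrow> bool" where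
  "sg V E \<longleftrightarrow> finite V \<and> (\<forall>x y. E x y \<longrightarrow> x \<in> V \<and> y \<in> V \<and> x \<noteq> y \<and> E y x)"

lemma sgD: assumes "sg V E" "E x y" shows "x \<in> V" "y \<in> V" "x \<noteq> y" "E y x"
  using assms by (auto simp: sg_def)

lemma sgV: assumes "sg V E" "E x y" shows "x \<in> V \<and> y \<in> V \<and> x \<noteq> y"
  using assms by (auto simp: sg_def)

lemma sg_finite: "sg V E \<Longrightarrow> finite V" by (simp add: sg_def)

lemma sg_induced: "sg V E \<Longrightarrow> W \<subseteq> V \<Longrightarrow> sg W (induced E W)"
  by (auto simp: sg_def induced_def intro: finite_subset)

lemma induced_idem: "induced (induced E W) W = induced E W"
  by (auto simp: induced_def fun_eq_iff)

lemma induced_induced: "induced (induced E W) W' = induced E (W \<inter> W')"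
  by (auto simp: induced_def fun_eq_iff)

lemma induced_self: "sg V E \<Longrightarrow> induced E V = E"
  by (auto simp: induced_def fun_eq_iff sg_def)

fun walk :: "('a \<Rightarrow> 'a \<Rightarrow> bool) \<Rightarrow> 'a list \<Rightarrow> bool" where
  "walk E [] = True"
| "walk E [x] = True"
| "walk E (x # y # xs) = (E x y \<and> walk E (y # xs))"

lemma walk_Cons: "walk E (x # xs) \<longleftrightarrow> (xs = [] \<or> (E x (hd xs) \<and> walk E xs))"
  by (cases xs) auto

lemma walk_nth: "walk E xs \<longleftrightarrow> (\<forall>i. Suc i < length xs \<longrightarrow> E (xs ! i) (xs ! Suc i))"
proof (induction xs)
  case Nil then show ?case by simp
next
  case (Cons a xs)
  show ?case
  proof (cases xs)
    case Nil then show ?thesis by simp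
  next
    case (Cons b ys)
    have "(\<forall>i. Suc i < length (a # xs) \<longrightarrow> E ((a # xs) ! i) ((a # xs) ! Suc i)) \<longleftrightarrow>
          E a b \<and> (\<forall>i. Suc i < length xs \<longrightarrow> E (xs ! i) (xs ! Suc i))"
    proof
      assume H: "\<forall>i. Suc i < length (a # xs) \<longrightarrow> E ((a # xs) ! i) ((a # xs) ! Suc i)"
      have "E a b" using H[rule_format, of 0] Cons by simp
      moreover have "\<forall>i. Suc i < length xs \<longrightarrow> E (xs ! i) (xs ! Suc i)"
        using H by (metis Suc_less_eq length_Cons nth_Cons_Suc)
      ultimately show "E a b \<and> (\<forall>i. Suc i < length xs \<longrightarrow> E (xs ! i) (xs ! Suc i))" by blast
    next
      assume H: "E a b \<and> (\<forall>i. Suc i < length xs \<longrightarrow> E (xs ! i) (xs ! Suc i))"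
      show "\<forall>i. Suc i < length (a # xs) \<longrightarrow> E ((a # xs) ! i) ((a # xs) ! Suc i)"
      proof (intro allI impI)
        fix i assume i: "Suc i < length (a # xs)"
        show "E ((a # xs) ! i) ((a # xs) ! Suc i)"
        proof (cases i)
          case 0 then show ?thesis using H Cons by simp
        next
          case (Suc j) then show ?thesis using H i by simp
        qed
      qed
    qed
    then show ?thesis using Cons.IH Cons by simp
  qed
qed

lemma walk_append1: "walk E (xs @ [a]) \<longleftrightarrow> walk E xs \<and> (xs \<noteq> [] \<longrightarrow> E (last xs) a)"
proof (induction xs)
  case (Cons b xs)
  then show ?case by (cases xs) auto
qed simp

lemma walk_take: "walk E xs \<Longrightarrow> walk E (take n xs)"
  by (auto simp: walk_nth)

lemma walk_drop: "walk E xs \<Longrightarrow> walk E (drop n xs)"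
  by (auto simp: walk_nth)

lemma walk_mono: "walk E xs \<Longrightarrow> (\<And>x y. x \<in> set xs \<Longrightarrow> y \<in> set xs \<Longrightarrow> E x y \<Longrightarrow> E' x y) \<Longrightarrow> walk E' xs"
proof (induction xs)
  case (Cons b xs)
  then show ?case by (cases xs) auto
qed simp

lemma walk_rtranclp: "walk E xs \<Longrightarrow> xs \<noteq> [] \<Longrightarrow> E\<^sup>*\<^sup>* (hd xs) (last xs)"
proof (induction xs)
  case (Cons x xs)
  show ?case
  proof (cases xs)
    case Nil then show ?thesis by simp
  next
    case (Cons y ys)
    then have "E\<^sup>*\<^sup>* y (last xs)" "E x y" using Cons.IH Cons.prems by (auto simp: walk_Cons)
    then have "E\<^sup>*\<^sup>* x (last xs)" by (rule converse_rtranclp_into_rtranclp[rotated])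
    then show ?thesis using Cons by simp
  qed
qed simp

lemma rtranclp_simple_walk:
  assumes "E\<^sup>*\<^sup>* a b"
  shows "\<exists>ps. ps \<noteq> [] \<and> hd ps = a \<and> last ps = b \<and> distinct ps \<and> walk E ps"
  using assms
proof (induction rule: converse_rtranclp_induct)
  case base
  then show ?case by (intro exI[of _ "[b]"]) auto
next
  case (step a c)
  then obtain ps where ps: "ps \<noteq> []" "hd ps = c" "last ps = b" "distinct ps" "walk E ps" by blast
  show ?case
  proof (cases "a \<in> set ps")
    case True
    then obtain j where j: "j < length ps" "ps ! j = a" by (metis in_set_conv_nth)
    show ?thesis
      apply (intro exI[of _ "drop j ps"])
      using ps j by (auto simp: hd_drop_conv_nth walk_drop)
  next
    case False
    show ?thesis
      apply (intro exI[of _ "a # ps"])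
      using ps False step(1) by (auto simp: walk_Cons)
  qed
qed

lemma is_cycle_walk: "is_cycle V E xs \<longleftrightarrow> length xs \<ge> 3 \<and> distinct xs \<and> set xs \<subseteq> V \<and> walk E xs \<and> E (last xs) (hd xs)"
  by (simp add: is_cycle_def walk_nth)

lemma is_cycle_rotate1: "is_cycle V E xs \<Longrightarrow> is_cycle V E (rotate1 xs)"
proof -
  assume c: "is_cycle V E xs"
  then obtain a as where xs: "xs = a # as" unfolding is_cycle_walk by (cases xs) auto
  have "as \<noteq> []" using c xs by (auto simp: is_cycle_walk)
  then show ?thesis using c unfolding xs is_cycle_walk
    by (auto simp: walk_append1 walk_Cons)
qed

lemma is_cycle_rotate: "is_cycle V E xs \<Longrightarrow> is_cycle V E (rotate n xs)"
  by (induction n) (auto intro: is_cycle_rotate1)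

lemma on_cycle_hd: assumes "on_cycle V E x"
  shows "\<exists>ys. is_cycle V E (x # ys)"
proof -
  obtain xs where c: "is_cycle V E xs" "x \<in> set xs" using assms by (auto simp: on_cycle_def)
  then obtain i where i: "i < length xs" "xs ! i = x" by (metis in_set_conv_nth)
  have ne: "rotate i xs \<noteq> []" using i by auto
  have "xs \<noteq> []" using i by auto
  then have "hd (rotate i xs) = x" using i hd_rotate_conv_nth[of xs i] by auto
  then have "rotate i xs = x # tl (rotate i xs)" using ne by (metis list.collapse)
  then show ?thesis using is_cycle_rotate[OF c(1), of i] by metis
qed



lemma rtranclp_sym: assumes "sg V E" "E\<^sup>*\<^sup>* a b" shows "E\<^sup>*\<^sup>* b a"
  using assms(2)
proof (induction rule: rtranclp_induct)
  case (step b c)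
  have "E c b" using sgD(4)[OF assms(1) step(2)] .
  then show ?case using step(3) by (rule converse_rtranclp_into_rtranclp)
qed simp

lemma walk_induced_set: "walk (induced E W) ps \<Longrightarrow> ps \<noteq> [] \<Longrightarrow> hd ps \<in> W \<Longrightarrow> set ps \<subseteq> W"
proof (induction ps)
  case (Cons a ps)
  show ?case
  proof (cases "ps = []")
    case True then show ?thesis using Cons.prems by simp
  next
    case False
    then have "induced E W a (hd ps)" "walk (induced E W) ps" using Cons.prems(1) by (auto simp: walk_Cons)
    then have "hd ps \<in> W" "walk (induced E W) ps" by (auto simp: induced_def)
    then have "set ps \<subseteq> W" using Cons.IH False by blast
    then show ?thesis using Cons.prems(3) by simp
  qed
qed simp

lemma is_cycle_del: "is_cycle V E xs \<Longrightarrow> x \<notin> set xs \<Longrightarrow> is_cycle (V - {x}) (induced E (V - {x})) xs"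
proof -
  assume c: "is_cycle V E xs" and x: "x \<notin> set xs"
  have c3: "length xs \<ge> 3" "distinct xs" "set xs \<subseteq> V" "walk E xs" "E (last xs) (hd xs)"
    using c unfolding is_cycle_walk by blast+
  have ne: "xs \<noteq> []" using c3(1) by auto
  have s: "set xs \<subseteq> V - {x}" using c3(3) x by blast
  have w: "walk (induced E (V - {x})) xs"
    by (rule walk_mono[OF c3(4)]) (use s in \<open>auto simp: induced_def\<close>)
  have "hd xs \<in> V - {x}" "last xs \<in> V - {x}" using s hd_in_set[OF ne] last_in_set[OF ne] by blast+
  then have "induced E (V - {x}) (last xs) (hd xs)" using c3(5) by (simp add: induced_def)
  then show ?thesis unfolding is_cycle_walk using c3 s w by blast
qed

context
  fixes V :: "'a set" and E :: "'a \<Rightarrow> 'a \<Rightarrow> bool" and x :: 'a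
  assumes G: "sg V E" and xV: "x \<in> V"
begin

abbreviation "V' \<equiv> V - {x}"
abbreviation "E' \<equiv> induced E (V - {x})"
abbreviation "N \<equiv> {w \<in> V. E x w}"

lemma N_sub: "N \<subseteq> V'" using G by (auto dest: sgV)

lemma cyc_iff: "on_cycle V E x \<longleftrightarrow> (\<exists>y z. y \<in> N \<and> z \<in> N \<and> y \<noteq> z \<and> E'\<^sup>*\<^sup>* y z)"
proof
  assume oc: "on_cycle V E x"
  obtain ys where c: "is_cycle V E (x # ys)" using on_cycle_hd[OF oc] by (elim exE)
  then have len: "length ys \<ge> 2" and d: "distinct (x # ys)" and s: "set (x # ys) \<subseteq> V"
    and w: "walk E (x # ys)" and l: "E (last (x # ys)) (hd (x # ys))"
    unfolding is_cycle_walk by auto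
  have ne: "ys \<noteq> []" using len by auto
  have e1: "E x (hd ys)" using w ne by (simp add: walk_Cons)
  have e2: "E x (last ys)" using l ne sgD(4)[OF G] by auto
  have hl: "hd ys \<noteq> last ys"
  proof
    assume "hd ys = last ys"
    then have "ys ! 0 = ys ! (length ys - 1)" using ne by (simp add: hd_conv_nth last_conv_nth)
    moreover have "distinct ys" using d by simp
    moreover have "0 < length ys" "length ys - 1 < length ys" using len by auto
    ultimately have "0 = length ys - 1" using nth_eq_iff_index_eq by metis
    then show False using len by auto
  qed
  have wy: "walk E ys" using w ne by (simp add: walk_Cons)
  have wy': "walk E' ys"
  proof (rule walk_mono[OF wy])
    fix a b assume "a \<in> set ys" "b \<in> set ys" "E a b"
    moreover have "x \<notin> set ys" "set ys \<subseteq> V" using d s by auto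
    ultimately show "E' a b" unfolding induced_def by blast
  qed
  have "E'\<^sup>*\<^sup>* (hd ys) (last ys)" using walk_rtranclp[OF wy' ne] .
  moreover have "hd ys \<in> N" "last ys \<in> N" using e1 e2 G by (auto dest: sgV)
  ultimately have H: "hd ys \<in> N \<and> last ys \<in> N \<and> hd ys \<noteq> last ys \<and> E'\<^sup>*\<^sup>* (hd ys) (last ys)"
    using hl by (intro conjI)
  show "\<exists>y z. y \<in> N \<and> z \<in> N \<and> y \<noteq> z \<and> E'\<^sup>*\<^sup>* y z"
    by (rule exI[of _ "hd ys"], rule exI[of _ "last ys"], rule H)
next
  assume "\<exists>y z. y \<in> N \<and> z \<in> N \<and> y \<noteq> z \<and> E'\<^sup>*\<^sup>* y z"
  then obtain y z where yz: "y \<in> N" "z \<in> N" "y \<noteq> z" "E'\<^sup>*\<^sup>* y z" by blast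
  obtain ps where ps: "ps \<noteq> []" "hd ps = y" "last ps = z" "distinct ps" "walk E' ps"
    using rtranclp_simple_walk[OF yz(4)] by blast
  have yV: "y \<in> V'" using yz N_sub by auto
  have sp: "set ps \<subseteq> V'" using walk_induced_set[OF ps(5) ps(1)] ps(2) yV by auto
  have "length ps \<noteq> 1"
  proof
    assume "length ps = 1"
    then obtain a where "ps = [a]" by (cases ps) auto
    then show False using ps yz by auto
  qed
  moreover have "length ps \<noteq> 0" using ps(1) by simp
  ultimately have len: "length ps \<ge> 2" by linarith
  have wE: "walk E ps" using ps(5) by (rule walk_mono) (simp add: induced_def)
  have "is_cycle V E (x # ps)"
    unfolding is_cycle_walk
    using len ps sp xV wE yz sgD(4)[OF G, of x z] by (auto simp: walk_Cons)
  then show "on_cycle V E x" unfolding on_cycle_def by auto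
qed

lemma not_on_cycle_small: "card N \<le> 1 \<Longrightarrow> \<not> on_cycle V E x"
proof
  assume c: "card N \<le> 1" and "on_cycle V E x"
  then obtain y z where "y \<in> N" "z \<in> N" "y \<noteq> z" using cyc_iff by blast
  moreover have "finite N" using sg_finite[OF G] by simp
  ultimately have "card {y, z} \<le> card N" by (intro card_mono) auto
  then show False using c \<open>y \<noteq> z\<close> by auto
qed

lemma walk_out: assumes "a \<in> V'" "E\<^sup>*\<^sup>* a b"
  shows "(\<exists>y\<in>N. E'\<^sup>*\<^sup>* a y) \<or> (b \<noteq> x \<and> E'\<^sup>*\<^sup>* a b)"
  using assms(2)
proof (induction rule: rtranclp_induct)
  case base then show ?case using assms(1) by auto
next
  case (step b c)
  show ?case
  proof (cases "\<exists>y\<in>N. E'\<^sup>*\<^sup>* a y")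
    case True then show ?thesis by blast
  next
    case False
    then have b: "b \<noteq> x" "E'\<^sup>*\<^sup>* a b" using step by auto
    show ?thesis
    proof (cases "c = x")
      case True
      then have "b \<in> N" using step(2) G sgD(4)[OF G step(2)] by (auto dest: sgV)
      then show ?thesis using b by blast
    next
      case False
      then have "E' b c" using step(2) b G by (auto simp: induced_def dest: sgV)
      then have "E'\<^sup>*\<^sup>* a c" using b(2) by (rule rtranclp.rtrancl_into_rtrancl[rotated])
      then show ?thesis using False by blast
    qed
  qed
qed

lemma E'_le: "E'\<^sup>*\<^sup>* a b \<Longrightarrow> E\<^sup>*\<^sup>* a b"
  by (rule rtranclp_mono[THEN predicate2D, rotated]) (auto simp: induced_def)

definition cls :: "'a \<Rightarrow> 'a set" where "cls a = {b \<in> V. E\<^sup>*\<^sup>* a b}"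
definition cls' :: "'a \<Rightarrow> 'a set" where "cls' a = {b \<in> V'. E'\<^sup>*\<^sup>* a b}"

lemma Q_eq: "V // {(a, b). a \<in> V \<and> b \<in> V \<and> (induced E V)\<^sup>*\<^sup>* a b} = cls ` V"
  unfolding quotient_def cls_def induced_self[OF G] by auto

lemma Q'_eq: "V' // {(a, b). a \<in> V' \<and> b \<in> V' \<and> (induced E' V')\<^sup>*\<^sup>* a b} = cls' ` V'"
  unfolding quotient_def cls'_def induced_idem by auto

lemma cls_eq: "a \<in> V \<Longrightarrow> E\<^sup>*\<^sup>* a b \<Longrightarrow> cls a = cls b"
  unfolding cls_def using rtranclp_sym[OF G]
  by (auto intro: rtranclp_trans)

lemma cls'_eq: "E'\<^sup>*\<^sup>* a b \<Longrightarrow> cls' a = cls' b"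
proof -
  have G': "sg V' E'" using sg_induced[OF G] by auto
  show "E'\<^sup>*\<^sup>* a b \<Longrightarrow> cls' a = cls' b"
    unfolding cls'_def using rtranclp_sym[OF G']
    by (auto intro: rtranclp_trans)
qed

lemma cls'_cls: assumes "a \<in> V'" "\<not> E\<^sup>*\<^sup>* a x" shows "cls' a = cls a"
proof
  show "cls' a \<subseteq> cls a" unfolding cls'_def cls_def using E'_le by auto
next
  show "cls a \<subseteq> cls' a"
  proof
    fix b assume "b \<in> cls a"
    then have bV: "b \<in> V" "E\<^sup>*\<^sup>* a b" by (auto simp: cls_def)
    have "\<not> (\<exists>y\<in>N. E'\<^sup>*\<^sup>* a y)"
    proof
      assume "\<exists>y\<in>N. E'\<^sup>*\<^sup>* a y"
      then obtain y where "y \<in> N" "E\<^sup>*\<^sup>* a y" using E'_le by blast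
      then have "E\<^sup>*\<^sup>* a x" using sgD(4)[OF G] by (auto intro: rtranclp.rtrancl_into_rtrancl)
      then show False using assms by auto
    qed
    then show "b \<in> cls' a" using walk_out[OF assms(1) bV(2)] bV by (auto simp: cls'_def)
  qed
qed

lemma comp_count:
  "card (cls' ` V') + 1 = card (cls ` V) + card ((\<lambda>y. cls' y) ` N)"
proof -
  let ?C = "cls x"
  let ?B = "cls' ` N"
  have fin: "finite V" using sg_finite[OF G] .
  have xC: "\<And>a. a \<in> V \<Longrightarrow> x \<in> cls a \<longleftrightarrow> E\<^sup>*\<^sup>* a x" using xV by (auto simp: cls_def)
  have eq: "cls' ` V' = (cls ` V - {?C}) \<union> ?B"
  proof (intro equalityI subsetI)
    fix X assume "X \<in> cls' ` V'"
    then obtain a where a: "a \<in> V'" "X = cls' a" by auto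
    show "X \<in> (cls ` V - {?C}) \<union> ?B"
    proof (cases "E\<^sup>*\<^sup>* a x")
      case True
      then obtain y where "y \<in> N" "E'\<^sup>*\<^sup>* a y" using walk_out[OF a(1) True] by blast
      then show ?thesis using a cls'_eq by auto
    next
      case False
      then have "X = cls a" using a cls'_cls by auto
      moreover have "x \<in> ?C" using xC[OF xV] by auto
      moreover have "x \<notin> cls a" using xC a False by auto
      ultimately show ?thesis using a by auto
    qed
  next
    fix X assume X: "X \<in> (cls ` V - {?C}) \<union> ?B"
    show "X \<in> cls' ` V'"
    proof (cases "X \<in> ?B")
      case True then show ?thesis using N_sub by auto
    next
      case False
      then obtain a where a: "a \<in> V" "X = cls a" "cls a \<noteq> ?C" using X by auto
      have na: "\<not> E\<^sup>*\<^sup>* a x" using cls_eq a by auto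
      then have "a \<noteq> x" by auto
      then show ?thesis using cls'_cls[of a] na a by auto
    qed
  qed
  have disj: "(cls ` V - {?C}) \<inter> ?B = {}"
  proof (rule ccontr)
    assume "(cls ` V - {?C}) \<inter> ?B \<noteq> {}"
    then obtain a y where a: "a \<in> V" "cls a \<noteq> ?C" "y \<in> N" "cls a = cls' y" by auto
    have "y \<in> cls' y" using a(3) N_sub by (auto simp: cls'_def)
    then have "E\<^sup>*\<^sup>* a y" using a by (auto simp: cls_def)
    then have "E\<^sup>*\<^sup>* a x" using a(3) sgD(4)[OF G] by (auto intro: rtranclp.rtrancl_into_rtrancl)
    then show False using cls_eq a by auto
  qed
  have f1: "finite (cls ` V)" using fin by auto
  have f2: "finite ?B" using fin by auto
  have "card (cls' ` V') = card (cls ` V - {?C}) + card ?B"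
    unfolding eq using disj f1 f2 by (intro card_Un_disjoint) auto
  moreover have "card (cls ` V - {?C}) + 1 = card (cls ` V)"
    using f1 xV by (simp add: card_Diff_singleton) (metis card_gt_0_iff empty_iff f1 imageI Suc_pred)
  ultimately show ?thesis by simp
qed

lemma edge_count: "card (edge_set V E) = card (edge_set V' E') + card N"
proof -
  have fin: "finite V" using sg_finite[OF G] .
  have eq: "edge_set V E = edge_set V' E' \<union> (\<lambda>y. {x, y}) ` N"
  proof (intro equalityI subsetI)
    fix e assume "e \<in> edge_set V E"
    then obtain a b where e: "e = {a, b}" "a \<in> V" "b \<in> V" "E a b" by (auto simp: edge_set_def)
    show "e \<in> edge_set V' E' \<union> (\<lambda>y. {x, y}) ` N"
    proof (cases "a = x \<or> b = x")
      case True
      then show ?thesis using e G sgD(4)[OF G e(4)] by (auto dest: sgV)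
    next
      case False
      then show ?thesis using e by (auto simp: edge_set_def induced_def)
    qed
  next
    fix e assume "e \<in> edge_set V' E' \<union> (\<lambda>y. {x, y}) ` N"
    then show "e \<in> edge_set V E"
    proof (elim UnE)
      assume "e \<in> edge_set V' E'" then show ?thesis by (auto simp: edge_set_def induced_def)
    next
      assume "e \<in> (\<lambda>y. {x, y}) ` N"
      then obtain y where "e = {x, y}" "y \<in> V" "E x y" by auto
      then show ?thesis unfolding edge_set_def using xV by blast
    qed
  qed
  have disj: "edge_set V' E' \<inter> (\<lambda>y. {x, y}) ` N = {}"
  proof -
    have "\<forall>e \<in> edge_set V' E'. x \<notin> e"
    proof
      fix e assume "e \<in> edge_set V' E'"
      then obtain a b where "e = {a, b}" "a \<in> V'" "b \<in> V'" unfolding edge_set_def by blast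
      then show "x \<notin> e" by blast
    qed
    moreover have "\<forall>e \<in> (\<lambda>y. {x, y}) ` N. x \<in> e" by auto
    ultimately show ?thesis unfolding disjoint_iff by metis
  qed
  have fe: "finite (edge_set V' E')"
  proof -
    have "edge_set V' E' \<subseteq> Pow V" by (auto simp: edge_set_def)
    then show ?thesis using fin finite_subset by blast
  qed
  have inj: "inj_on (\<lambda>y. {x, y}) N"
  proof (rule inj_onI)
    fix y z assume "y \<in> N" "z \<in> N" "{x, y} = {x, z}"
    moreover have "y \<noteq> x" "z \<noteq> x" using \<open>y \<in> N\<close> \<open>z \<in> N\<close> sgV[OF G] by auto
    ultimately show "y = z" by (metis doubleton_eq_iff)
  qed
  have "card (edge_set V E) = card (edge_set V' E') + card ((\<lambda>y. {x, y}) ` N)"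
    unfolding eq using disj fe fin by (intro card_Un_disjoint) auto
  also have "card ((\<lambda>y. {x, y}) ` N) = card N" using inj by (rule card_image)
  finally show ?thesis .
qed

lemma cyc_del:
  "cyclomatic V' E' \<le> cyclomatic V E \<and>
   (cyclomatic V' E' = cyclomatic V E \<longleftrightarrow> \<not> on_cycle V E x)"
proof -
  have fin: "finite V" using sg_finite[OF G] .
  have finN: "finite N" using fin by auto
  let ?k = "card (cls' ` N)"
  have nc: "num_components V E = card (cls ` V)"
    unfolding num_components_def Q_eq ..
  have nc': "num_components V' E' = card (cls' ` V')"
    unfolding num_components_def Q'_eq ..
  have cV: "card V = card V' + 1" using card_Suc_Diff1[OF fin xV] by simp
  have kle: "?k \<le> card N" using finN card_image_le by blast
  have cyc: "cyclomatic V' E' = cyclomatic V E - (int (card N) - int ?k)"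
    unfolding cyclomatic_def using nc nc' cV edge_count comp_count by simp
  have "?k = card N \<longleftrightarrow> inj_on cls' N" using inj_on_iff_eq_card[OF finN] by auto
  also have "\<dots> \<longleftrightarrow> \<not> on_cycle V E x"
  proof -
    have "(\<not> inj_on cls' N) \<longleftrightarrow> (\<exists>y z. y \<in> N \<and> z \<in> N \<and> y \<noteq> z \<and> E'\<^sup>*\<^sup>* y z)"
    proof
      assume "\<not> inj_on cls' N"
      then obtain y z where yz: "y \<in> N" "z \<in> N" "y \<noteq> z" "cls' y = cls' z"
        unfolding inj_on_def by blast
      have "z \<in> cls' z" using yz N_sub by (auto simp: cls'_def)
      then have "E'\<^sup>*\<^sup>* y z" using yz by (auto simp: cls'_def)
      then show "\<exists>y z. y \<in> N \<and> z \<in> N \<and> y \<noteq> z \<and> E'\<^sup>*\<^sup>* y z" using yz by blast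
    next
      assume "\<exists>y z. y \<in> N \<and> z \<in> N \<and> y \<noteq> z \<and> E'\<^sup>*\<^sup>* y z"
      then obtain y z where yz: "y \<in> N" "z \<in> N" "y \<noteq> z" "E'\<^sup>*\<^sup>* y z" by blast
      then show "\<not> inj_on cls' N" using cls'_eq[OF yz(4)] unfolding inj_on_def by blast
    qed
    then show ?thesis using cyc_iff by blast
  qed
  finally show ?thesis using cyc kle by auto
qed

end



definition res :: "'a set \<Rightarrow> ('a \<Rightarrow> complex) \<Rightarrow> 'a \<Rightarrow> complex" where
  "res W g = (\<lambda>j. if j \<in> W then g j else 0)"

lemma res_span:
  assumes "g \<in> fun_cvs.span S" shows "res W g \<in> fun_cvs.span (res W ` S)"
proof -
  have "fun_cvs.subspace {g. res W g \<in> fun_cvs.span (res W ` S)}"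
    unfolding fun_cvs.subspace_def
  proof (intro conjI ballI allI)
    have "res W 0 = 0" by (simp add: res_def fun_eq_iff)
    then show "0 \<in> {g. res W g \<in> fun_cvs.span (res W ` S)}" using fun_cvs.span_zero by simp
  next
    fix x y assume "x \<in> {g. res W g \<in> fun_cvs.span (res W ` S)}" "y \<in> {g. res W g \<in> fun_cvs.span (res W ` S)}"
    moreover have "res W (x + y) = res W x + res W y" by (simp add: res_def fun_eq_iff)
    ultimately show "x + y \<in> {g. res W g \<in> fun_cvs.span (res W ` S)}"
      using fun_cvs.span_add by simp
  next
    fix c x assume "x \<in> {g. res W g \<in> fun_cvs.span (res W ` S)}"
    moreover have "res W (cscale c x) = cscale c (res W x)" by (simp add: res_def fun_eq_iff cscale_def)
    ultimately show "cscale c x \<in> {g. res W g \<in> fun_cvs.span (res W ` S)}"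
      using fun_cvs.span_scale by simp
  qed
  moreover have "\<And>x. x \<in> S \<Longrightarrow> res W x \<in> fun_cvs.span (res W ` S)"
    by (rule fun_cvs.span_base) simp
  ultimately show ?thesis using fun_cvs.span_induct[OF assms] by blast
qed

lemma dim_res_le:
  assumes "finite S" "T \<subseteq> res W ` S" shows "fun_cvs.dim T \<le> fun_cvs.dim S"
proof -
  obtain B where B: "B \<subseteq> S" "fun_cvs.independent B" "S \<subseteq> fun_cvs.span B"
    using fun_cvs.maximal_independent_subset[of S] by blast
  have fB: "finite B" using B(1) assms(1) finite_subset by blast
  have cB: "card B = fun_cvs.dim S" using fun_cvs.basis_card_eq_dim[OF B(1) B(3) B(2)] .
  have "T \<subseteq> fun_cvs.span (res W ` B)"
  proof
    fix t assume "t \<in> T"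
    then obtain s where "s \<in> S" "t = res W s" using assms(2) by blast
    then show "t \<in> fun_cvs.span (res W ` B)" using res_span[of s B W] B(3) by blast
  qed
  then have "fun_cvs.dim T \<le> card (res W ` B)" using fB by (intro fun_cvs.dim_le_card) auto
  also have "\<dots> \<le> card B" using fB card_image_le by blast
  finally show ?thesis using cB by simp
qed

lemma rank_mono:
  assumes "sg V E" "W \<subseteq> V"
  shows "gain_rank W (induced E W) phi \<le> gain_rank V E phi"
proof -
  have fin: "finite V" using sg_finite[OF assms(1)] .
  have "adj_row W (induced E W) phi ` W \<subseteq> res W ` (adj_row V E phi ` V)"
  proof
    fix r assume "r \<in> adj_row W (induced E W) phi ` W"
    then obtain w where w: "w \<in> W" "r = adj_row W (induced E W) phi w" by blast
    have "r = res W (adj_row V E phi w)"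
      using w assms(2) by (auto simp: fun_eq_iff res_def adj_row_def adj_def induced_def)
    then show "r \<in> res W ` (adj_row V E phi ` V)" using w assms(2) by blast
  qed
  then show ?thesis unfolding gain_rank_def using fin by (intro dim_res_le) auto
qed

lemma dim_insert_notin:
  assumes "finite S" "x \<notin> fun_cvs.span S"
  shows "fun_cvs.dim (insert x S) = fun_cvs.dim S + 1"
proof -
  obtain B where B: "B \<subseteq> S" "fun_cvs.independent B" "S \<subseteq> fun_cvs.span B"
    using fun_cvs.maximal_independent_subset[of S] by blast
  have fB: "finite B" using B(1) assms(1) finite_subset by blast
  have cB: "card B = fun_cvs.dim S" using fun_cvs.basis_card_eq_dim[OF B(1) B(3) B(2)] .
  have spB: "fun_cvs.span B \<subseteq> fun_cvs.span S" using B(1) fun_cvs.span_mono by blast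
  have xB: "x \<notin> fun_cvs.span B" using spB assms(2) by blast
  then have xB': "x \<notin> B" using fun_cvs.span_base by blast
  have ind: "fun_cvs.independent (insert x B)" using fun_cvs.independent_insertI[OF xB B(2)] .
  have sub: "insert x B \<subseteq> insert x S" using B(1) by blast
  have spn: "insert x S \<subseteq> fun_cvs.span (insert x B)"
  proof -
    have "fun_cvs.span B \<subseteq> fun_cvs.span (insert x B)" by (rule fun_cvs.span_mono) blast
    moreover have "x \<in> fun_cvs.span (insert x B)" by (rule fun_cvs.span_base) simp
    ultimately show ?thesis using B(3) by blast
  qed
  have "card (insert x B) = fun_cvs.dim (insert x S)"
    using fun_cvs.basis_card_eq_dim[OF sub spn ind] .
  moreover have "card (insert x B) = card B + 1" using fB xB' by simp
  ultimately show ?thesis using cB by simp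
qed

lemma dim_empty: "fun_cvs.dim ({} :: ('a \<Rightarrow> complex) set) = 0"
proof -
  have "fun_cvs.dim ({} :: ('a \<Rightarrow> complex) set) \<le> card ({} :: ('a \<Rightarrow> complex) set)"
    by (rule fun_cvs.dim_le_card) auto
  then show ?thesis by simp
qed

lemma van:
  assumes "p \<notin> W" "g \<in> fun_cvs.span (adj_row W F phi ` W)" shows "g p = 0"
proof -
  have "fun_cvs.subspace {g. g p = 0}"
    unfolding fun_cvs.subspace_def by (simp add: cscale_def)
  moreover have "\<And>x. x \<in> adj_row W F phi ` W \<Longrightarrow> x p = 0"
    using assms(1) by (auto simp: adj_row_def)
  ultimately show ?thesis using fun_cvs.span_induct[OF assms(2), of "\<lambda>g. g p = 0"] by blast
qed

lemma rank_pendant: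
  assumes G: "sg V E" and nz: "\<And>a b. E a b \<Longrightarrow> phi a b \<noteq> 0"
    and uv: "E u v" and pu: "\<And>w. E u w \<Longrightarrow> w = v"
  shows "gain_rank V E phi = gain_rank (V - {u, v}) (induced E (V - {u, v})) phi + 2"
proof -
  define V0 where "V0 = V - {u, v}"
  define E0 where "E0 = induced E V0"
  define R where "R = adj_row V E phi"
  define R0 where "R0 = adj_row V0 E0 phi"
  define S0 where "S0 = R0 ` V0"
  define dv :: "'a \<Rightarrow> complex" where "dv = (\<lambda>j. if j = v then 1 else 0)"
  have fin: "finite V" using sg_finite[OF G] .
  have uV: "u \<in> V" "v \<in> V" "u \<noteq> v" using sgV[OF G uv] by auto
  have vu: "E v u" using sgD(4)[OF G uv] .
  have nwu: "\<And>w. w \<in> V0 \<Longrightarrow> \<not> E w u"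
  proof
    fix w assume "w \<in> V0" "E w u"
    then have "E u w" using sgD(4)[OF G] by blast
    then have "w = v" using pu by blast
    then show False using \<open>w \<in> V0\<close> by (simp add: V0_def)
  qed
  have Ru: "R u = cscale (phi u v) dv"
  proof (rule ext)
    fix j show "R u j = cscale (phi u v) dv j"
    proof (cases "j = v")
      case True then show ?thesis using uV uv by (simp add: R_def adj_row_def adj_def cscale_def dv_def)
    next
      case False
      then have "\<not> E u j" using pu by blast
      then show ?thesis using False by (simp add: R_def adj_row_def adj_def cscale_def dv_def)
    qed
  qed
  have Rw: "R w = cscale (adj E phi w v) dv + R0 w" if w: "w \<in> V0" for w
  proof (rule ext)
    fix j
    show "R w j = (cscale (adj E phi w v) dv + R0 w) j"
    proof (cases "j = v")
      case True then show ?thesis using uV by (simp add: R_def R0_def adj_row_def cscale_def dv_def V0_def)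
    next
      case False
      show ?thesis
      proof (cases "j = u")
        case True then show ?thesis using nwu[OF w] uV
          by (simp add: R_def R0_def adj_row_def cscale_def dv_def V0_def adj_def)
      next
        case False
        then show ?thesis using \<open>j \<noteq> v\<close> w
          by (simp add: R_def R0_def adj_row_def cscale_def dv_def V0_def adj_def E0_def induced_def)
      qed
    qed
  qed
  have Rvu: "R v u \<noteq> 0" using uV vu nz[OF vu] by (simp add: R_def adj_row_def adj_def)
  have vanS0: "\<And>g p. p \<notin> V0 \<Longrightarrow> g \<in> fun_cvs.span S0 \<Longrightarrow> g p = 0"
    unfolding S0_def R0_def by (rule van)
  have uV0: "u \<notin> V0" "v \<notin> V0" by (auto simp: V0_def)
  define T where "T = insert dv (insert (R v) S0)"
  have VV: "V = insert u (insert v V0)" using uV by (auto simp: V0_def)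
  have sp: "fun_cvs.span (R ` V) = fun_cvs.span T"
    unfolding fun_cvs.span_eq
  proof
    show "R ` V \<subseteq> fun_cvs.span T"
    proof
      fix r assume "r \<in> R ` V"
      then obtain a where a: "a \<in> V" "r = R a" by blast
      have dvT: "dv \<in> fun_cvs.span T" by (rule fun_cvs.span_base) (simp add: T_def)
      show "r \<in> fun_cvs.span T"
      proof (cases "a = u")
        case True then show ?thesis using a Ru fun_cvs.span_scale[OF dvT] by simp
      next
        case False
        show ?thesis
        proof (cases "a = v")
          case True then show ?thesis using a by (intro fun_cvs.span_base) (simp add: T_def)
        next
          case False
          then have aV0: "a \<in> V0" using a \<open>a \<noteq> u\<close> by (simp add: V0_def)
          have "R0 a \<in> fun_cvs.span T" by (rule fun_cvs.span_base) (simp add: T_def S0_def aV0)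
          then have "cscale (adj E phi a v) dv + R0 a \<in> fun_cvs.span T"
            by (rule fun_cvs.span_add[OF fun_cvs.span_scale[OF dvT]])
          then show ?thesis using a Rw[OF aV0] by simp
        qed
      qed
    qed
  next
    have RuS: "R u \<in> fun_cvs.span (R ` V)" by (rule fun_cvs.span_base) (simp add: uV)
    have "dv = cscale (inverse (phi u v)) (R u)"
      using Ru nz[OF uv] by (simp add: cscale_def fun_eq_iff)
    then have dvS: "dv \<in> fun_cvs.span (R ` V)" using fun_cvs.span_scale[OF RuS] by simp
    have RvS: "R v \<in> fun_cvs.span (R ` V)" by (rule fun_cvs.span_base) (simp add: uV)
    have "R0 w \<in> fun_cvs.span (R ` V)" if w: "w \<in> V0" for w
    proof -
      have "R0 w = R w - cscale (adj E phi w v) dv" using Rw[OF w] by (simp add: fun_eq_iff)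
      moreover have "R w \<in> fun_cvs.span (R ` V)" by (rule fun_cvs.span_base) (use w in \<open>simp add: V0_def\<close>)
      moreover have "R w - cscale (adj E phi w v) dv \<in> fun_cvs.span (R ` V)"
        by (rule fun_cvs.span_diff[OF calculation(2) fun_cvs.span_scale[OF dvS]])
      ultimately show ?thesis by simp
    qed
    then show "T \<subseteq> fun_cvs.span (R ` V)" using dvS RvS by (auto simp: T_def S0_def)
  qed
  have finS0: "finite S0" using fin by (simp add: S0_def V0_def)
  have RvS0: "R v \<notin> fun_cvs.span S0" using vanS0[OF uV0(1)] Rvu by blast
  have dvS1: "dv \<notin> fun_cvs.span (insert (R v) S0)"
  proof
    assume "dv \<in> fun_cvs.span (insert (R v) S0)"
    then obtain k where k: "dv - cscale k (R v) \<in> fun_cvs.span S0"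
      unfolding fun_cvs.span_insert by blast
    have "(dv - cscale k (R v)) u = 0" using vanS0[OF uV0(1) k] .
    then have "k * R v u = 0" using uV by (simp add: dv_def cscale_def)
    then have "k = 0" using Rvu by simp
    then have e: "dv - cscale k (R v) = dv" by (simp add: cscale_def fun_eq_iff)
    have "dv \<in> fun_cvs.span S0" using k unfolding e .
    then have "dv v = 0" using vanS0[OF uV0(2)] by blast
    then show False by (simp add: dv_def)
  qed
  have "gain_rank V E phi = fun_cvs.dim T"
    unfolding gain_rank_def R_def[symmetric] using sp by (rule fun_cvs.span_eq_dim)
  also have "\<dots> = fun_cvs.dim (insert (R v) S0) + 1"
    unfolding T_def using finS0 dvS1 by (intro dim_insert_notin) auto
  also have "\<dots> = fun_cvs.dim S0 + 2"
    using dim_insert_notin[OF finS0 RvS0] by simp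
  also have "fun_cvs.dim S0 = gain_rank V0 E0 phi"
    by (simp add: gain_rank_def S0_def R0_def)
  finally show ?thesis by (simp add: V0_def E0_def)
qed



lemma indep_fin: "finite V \<Longrightarrow> finite {card S | S. independent_set V E S}"
proof -
  assume fin: "finite V"
  have "{card S | S. independent_set V E S} \<subseteq> {..card V}"
  proof
    fix n assume "n \<in> {card S | S. independent_set V E S}"
    then obtain S where "n = card S" "S \<subseteq> V" by (auto simp: independent_set_def)
    then show "n \<in> {..card V}" using card_mono[OF fin] by auto
  qed
  then show ?thesis using finite_subset by blast
qed

lemma indep_le: "finite V \<Longrightarrow> independent_set V E S \<Longrightarrow> card S \<le> indep_num V E"
  unfolding indep_num_def by (rule Max_ge) (auto intro: indep_fin)

lemma indep_ex: "finite V \<Longrightarrow> \<exists>S. independent_set V E S \<and> card S = indep_num V E"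
proof -
  assume fin: "finite V"
  have "independent_set V E {}" by (simp add: independent_set_def)
  then have ne: "{card S | S. independent_set V E S} \<noteq> {}" by blast
  have "indep_num V E \<in> {card S | S. independent_set V E S}"
    unfolding indep_num_def using Max_in[OF indep_fin[OF fin] ne] .
  then show ?thesis by auto
qed

lemma indep_mono: assumes "finite V" "W \<subseteq> V"
  shows "indep_num W (induced E W) \<le> indep_num V E"
proof -
  obtain S where S: "independent_set W (induced E W) S" "card S = indep_num W (induced E W)"
    using indep_ex[OF finite_subset[OF assms(2) assms(1)]] by blast
  have "independent_set V E S" using S(1) assms(2) unfolding independent_set_def induced_def by blast
  then have "card S \<le> indep_num V E" by (rule indep_le[OF assms(1)])
  then show ?thesis using S(2) by simp
qed

lemma indep_isolated: assumes G: "sg V E" and x: "x \<in> V" and iso: "\<And>w. \<not> E x w"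
  shows "indep_num (V - {x}) (induced E (V - {x})) + 1 \<le> indep_num V E"
proof -
  have fin: "finite V" using sg_finite[OF G] .
  obtain S where S: "independent_set (V - {x}) (induced E (V - {x})) S"
      "card S = indep_num (V - {x}) (induced E (V - {x}))"
    using indep_ex[of "V - {x}"] fin by blast
  have SV: "S \<subseteq> V - {x}" using S(1) by (simp add: independent_set_def)
  have "independent_set V E (insert x S)"
    unfolding independent_set_def
  proof (intro conjI ballI)
    show "insert x S \<subseteq> V" using SV x by blast
  next
    fix a b assume a: "a \<in> insert x S" and b: "b \<in> insert x S"
    show "\<not> E a b"
    proof
      assume e: "E a b"
      have "a \<noteq> x" using e iso by blast
      moreover have "b \<noteq> x" using sgD(4)[OF G e] iso by blast
      ultimately have "a \<in> S" "b \<in> S" using a b by auto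
      then have "\<not> induced E (V - {x}) a b" using S(1) by (simp add: independent_set_def)
      then show False using e \<open>a \<in> S\<close> \<open>b \<in> S\<close> SV unfolding induced_def by blast
    qed
  qed
  then have "card (insert x S) \<le> indep_num V E" using indep_le[OF fin] by blast
  moreover have "x \<notin> S" using SV by blast
  moreover have "card (insert x S) = card S + 1"
    using calculation(2) finite_subset[OF SV] fin by simp
  ultimately show ?thesis using S(2) by simp
qed

lemma indep_pendant: assumes G: "sg V E" and uv: "E u v" and pu: "\<And>w. E u w \<Longrightarrow> w = v"
  shows "indep_num V E = indep_num (V - {u, v}) (induced E (V - {u, v})) + 1"
proof -
  have fin: "finite V" using sg_finite[OF G] .
  have uV: "u \<in> V" "v \<in> V" "u \<noteq> v" using sgV[OF G uv] by auto
  let ?V0 = "V - {u, v}"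
  obtain S where S: "independent_set ?V0 (induced E ?V0) S" "card S = indep_num ?V0 (induced E ?V0)"
    using indep_ex[of ?V0] fin by blast
  have SV: "S \<subseteq> ?V0" using S(1) by (simp add: independent_set_def)
  have "independent_set V E (insert u S)"
    unfolding independent_set_def
  proof (intro conjI ballI)
    show "insert u S \<subseteq> V" using SV uV by blast
  next
    fix a b assume a: "a \<in> insert u S" and b: "b \<in> insert u S"
    show "\<not> E a b"
    proof
      assume e: "E a b"
      have "a \<noteq> u"
      proof
        assume "a = u" then have "b = v" using pu e by blast
        then show False using b SV uV by auto
      qed
      moreover have "b \<noteq> u"
      proof
        assume "b = u" then have "a = v" using pu sgD(4)[OF G e] by blast
        then show False using a SV uV by auto
      qed
      ultimately have "a \<in> S" "b \<in> S" using a b by auto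
      then have "\<not> induced E ?V0 a b" using S(1) by (simp add: independent_set_def)
      then show False using e \<open>a \<in> S\<close> \<open>b \<in> S\<close> SV unfolding induced_def by blast
    qed
  qed
  then have "card (insert u S) \<le> indep_num V E" using indep_le[OF fin] by blast
  moreover have "u \<notin> S" using SV by blast
  moreover have "card (insert u S) = card S + 1"
    using calculation(2) finite_subset[OF SV] fin by simp
  ultimately have ge: "indep_num ?V0 (induced E ?V0) + 1 \<le> indep_num V E" using S(2) by simp
  obtain T where T: "independent_set V E T" "card T = indep_num V E"
    using indep_ex[OF fin] by blast
  have TV: "T \<subseteq> V" using T(1) by (simp add: independent_set_def)
  have "independent_set ?V0 (induced E ?V0) (T - {u, v})"
    using T(1) unfolding independent_set_def induced_def by blast
  then have le0: "card (T - {u, v}) \<le> indep_num ?V0 (induced E ?V0)" using indep_le[of ?V0] fin by blast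
  have finT: "finite T" using finite_subset[OF TV fin] .
  have "\<not> (u \<in> T \<and> v \<in> T)" using T(1) uv unfolding independent_set_def by blast
  then have "card (T \<inter> {u, v}) \<le> 1"
    by (cases "u \<in> T"; cases "v \<in> T") (auto simp: Int_insert_right)
  moreover have "card T = card (T - {u, v}) + card (T \<inter> {u, v})"
    using finT by (metis Diff_Diff_Int card_Diff_subset_Int card_mono inf_le1 le_add_diff_inverse2
          finite_Int Int_commute card_Int_Diff)
  ultimately have "card T \<le> card (T - {u, v}) + 1" by simp
  then show ?thesis using ge le0 T(2) by simp
qed

lemma long_path:
  assumes G: "sg V E" and ne: "V \<noteq> {}"
  shows "\<exists>x\<in>V. on_cycle V E x \<or> card {w \<in> V. E x w} \<le> 1"
proof -
  have fin: "finite V" using sg_finite[OF G] .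
  define P where "P = {ps. ps \<noteq> [] \<and> distinct ps \<and> set ps \<subseteq> V \<and> walk E ps}"
  have Lsub: "length ` P \<subseteq> {..card V}"
  proof
    fix n assume "n \<in> length ` P"
    then obtain ps where "ps \<in> P" "n = length ps" by blast
    then have "n = card (set ps)" "set ps \<subseteq> V" by (auto simp: P_def distinct_card)
    then show "n \<in> {..card V}" using card_mono[OF fin] by auto
  qed
  then have finL: "finite (length ` P)" using finite_subset by blast
  obtain a0 where "a0 \<in> V" using ne by blast
  then have "[a0] \<in> P" by (simp add: P_def)
  then have neL: "length ` P \<noteq> {}" by blast
  obtain ps where ps: "ps \<in> P" "length ps = Max (length ` P)"
    using Max_in[OF finL neL] by auto
  have maxp: "\<And>qs. qs \<in> P \<Longrightarrow> length qs \<le> length ps"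
    using ps(2) Max_ge[OF finL] by auto
  have psP: "ps \<noteq> []" "distinct ps" "set ps \<subseteq> V" "walk E ps" using ps(1) by (auto simp: P_def)
  define a where "a = hd ps"
  have aV: "a \<in> V" using psP a_def hd_in_set by blast
  have inps: "w \<in> set ps" if w: "E a w" for w
  proof (rule ccontr)
    assume nw: "w \<notin> set ps"
    have "w \<in> V" using sgV[OF G w] by blast
    moreover have "E w (hd ps)" using sgD(4)[OF G w] a_def by simp
    ultimately have "w # ps \<in> P" using psP nw by (simp add: P_def walk_Cons)
    then show False using maxp by fastforce
  qed
  show ?thesis
  proof (cases "card {w \<in> V. E a w} \<le> 1")
    case True then show ?thesis using aV by blast
  next
    case False
    have "2 \<le> card {w \<in> V. E a w}" using False by simp
    then obtain w1 w2 where w: "w1 \<in> {w \<in> V. E a w}" "w2 \<in> {w \<in> V. E a w}" "w1 \<noteq> w2"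
    proof -
      assume th: "\<And>w1 w2. w1 \<in> {w \<in> V. E a w} \<Longrightarrow> w2 \<in> {w \<in> V. E a w} \<Longrightarrow> w1 \<noteq> w2 \<Longrightarrow> thesis"
      let ?N = "{w \<in> V. E a w}"
      have "?N \<noteq> {}"
      proof
        assume "?N = {}" then have "card ?N = 0" by (simp only: card.empty)
        then show False using False by linarith
      qed
      then obtain w1 where w1: "w1 \<in> ?N" by blast
      have "finite ?N" using fin by simp
      then have "card (?N - {w1}) = card ?N - 1" using w1 by simp
      have "?N - {w1} \<noteq> {}"
      proof
        assume "?N - {w1} = {}" then have "card (?N - {w1}) = 0" by (simp only: card.empty)
        then show False using False \<open>card (?N - {w1}) = card ?N - 1\<close> by linarith
      qed
      then obtain w2 where "w2 \<in> ?N - {w1}" by blast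
      then show thesis using th[OF w1] by blast
    qed
    obtain rest where psr: "ps = a # rest" using psP(1) a_def by (cases ps) auto
    obtain w where ww: "E a w" "w \<noteq> a" "rest = [] \<or> w \<noteq> hd rest"
    proof (cases "rest = [] \<or> w1 \<noteq> hd rest")
      case True then show ?thesis using that w sgV[OF G] by blast
    next
      case False then have "w2 \<noteq> hd rest" using w by auto
      then show ?thesis using that w sgV[OF G] by blast
    qed
    have "w \<in> set ps" using inps ww by blast
    then obtain j where j: "j < length ps" "ps ! j = w" by (metis in_set_conv_nth)
    have j0: "j \<noteq> 0"
    proof
      assume "j = 0" then have "w = a" using j(2) psr by simp
      then show False using ww(2) by simp
    qed
    have j1: "j \<noteq> 1"
    proof
      assume "j = 1"
      then have "rest \<noteq> []" "w = hd rest" using j psr by (auto simp: hd_conv_nth)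
      then show False using ww by auto
    qed
    define xs where "xs = take (Suc j) ps"
    have lx: "length xs = Suc j" using j by (simp add: xs_def)
    have "is_cycle V E xs"
      unfolding is_cycle_walk
    proof (intro conjI)
      show "3 \<le> length xs" using lx j0 j1 by simp
      show "distinct xs" using psP(2) by (simp add: xs_def)
      show "set xs \<subseteq> V" using psP(3) set_take_subset[of "Suc j" ps] by (simp add: xs_def)
      show "walk E xs" using walk_take[OF psP(4)] by (simp add: xs_def)
      have xne: "xs \<noteq> []" using lx by auto
      have "last xs = xs ! j" using last_conv_nth[OF xne] lx by simp
      also have "\<dots> = ps ! j" by (simp add: xs_def)
      finally have "last xs = w" using j(2) by simp
      moreover have "hd xs = a" using psP(1) a_def by (simp add: xs_def)
      ultimately show "E (last xs) (hd xs)" using sgD(4)[OF G ww(1)] by simp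
    qed
    moreover have "a \<in> set xs" using psP(1) a_def lx
      by (metis hd_in_set hd_take list.size(3) nat.distinct(1) xs_def zero_less_Suc)
    ultimately show ?thesis using aV unfolding on_cycle_def by blast
  qed
qed



lemma cyc_empty: "cyclomatic {} E = 0"
  by (simp add: cyclomatic_def edge_set_def num_components_def quotient_def)

lemma del2_set: "V - {u} - {v} = V - {u, v}" by blast

lemma del2_rel: "induced (induced E (V - {u})) (V - {u} - {v}) = induced E (V - {u, v})"
  unfolding induced_induced by (rule arg_cong[where f = "induced E"]) blast

lemma del2_rel': "induced (induced E (V - {u})) (V - {u, v}) = induced E (V - {u, v})"
  unfolding induced_induced by (rule arg_cong[where f = "induced E"]) blast

lemma cyc_lt: assumes "sg V E" "x \<in> V" "on_cycle V E x"
  shows "cyclomatic (V - {x}) (induced E (V - {x})) < cyclomatic V E"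
  using cyc_del[OF assms(1,2)] assms(3) by auto

lemma cyc_eq: assumes "sg V E" "x \<in> V" "\<not> on_cycle V E x"
  shows "cyclomatic (V - {x}) (induced E (V - {x})) = cyclomatic V E"
  using cyc_del[OF assms(1,2)] assms(3) by auto

lemma pendant_cyc:
  assumes G: "sg V E" and uv: "E u v" and pu: "\<And>w. E u w \<Longrightarrow> w = v"
  shows "cyclomatic (V - {u, v}) (induced E (V - {u, v})) \<le> cyclomatic V E"
    and "cyclomatic (V - {u, v}) (induced E (V - {u, v})) = cyclomatic V E \<longleftrightarrow> \<not> on_cycle V E v"
proof -
  have uV: "u \<in> V" "v \<in> V" "u \<noteq> v" using sgV[OF G uv] by auto
  have Nu: "{w \<in> V. E u w} = {v}" using uV uv pu by blast
  have nu: "\<not> on_cycle V E u" using not_on_cycle_small[OF G uV(1)] Nu by simp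
  let ?V1 = "V - {u}" let ?E1 = "induced E (V - {u})"
  have c1: "cyclomatic ?V1 ?E1 = cyclomatic V E" using cyc_eq[OF G uV(1) nu] .
  have G1: "sg ?V1 ?E1" using sg_induced[OF G] by blast
  have v1: "v \<in> ?V1" using uV by blast
  have oc: "on_cycle ?V1 ?E1 v \<longleftrightarrow> on_cycle V E v"
  proof
    assume "on_cycle ?V1 ?E1 v"
    then obtain xs where xs: "is_cycle ?V1 ?E1 xs" "v \<in> set xs" unfolding on_cycle_def by blast
    have c3: "length xs \<ge> 3" "distinct xs" "set xs \<subseteq> ?V1" "walk ?E1 xs" "?E1 (last xs) (hd xs)"
      using xs(1) unfolding is_cycle_walk by blast+
    have w: "walk E xs" by (rule walk_mono[OF c3(4)]) (simp add: induced_def)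
    have "set xs \<subseteq> V" "E (last xs) (hd xs)" using c3(3,5) unfolding induced_def by blast+
    then have "is_cycle V E xs" using c3(1,2) w unfolding is_cycle_walk by blast
    then show "on_cycle V E v" using xs(2) unfolding on_cycle_def by blast
  next
    assume "on_cycle V E v"
    then obtain xs where xs: "is_cycle V E xs" "v \<in> set xs" unfolding on_cycle_def by blast
    have "u \<notin> set xs" using xs(1) nu unfolding on_cycle_def by blast
    then have "is_cycle ?V1 ?E1 xs" using is_cycle_del[OF xs(1)] by blast
    then show "on_cycle ?V1 ?E1 v" using xs(2) unfolding on_cycle_def by blast
  qed
  have d: "cyclomatic (?V1 - {v}) (induced ?E1 (?V1 - {v})) \<le> cyclomatic ?V1 ?E1 \<and>
      (cyclomatic (?V1 - {v}) (induced ?E1 (?V1 - {v})) = cyclomatic ?V1 ?E1 \<longleftrightarrow> \<not> on_cycle ?V1 ?E1 v)"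
    using cyc_del[OF G1 v1] .
  then show "cyclomatic (V - {u, v}) (induced E (V - {u, v})) \<le> cyclomatic V E"
    and "cyclomatic (V - {u, v}) (induced E (V - {u, v})) = cyclomatic V E \<longleftrightarrow> \<not> on_cycle V E v"
    unfolding del2_set del2_rel' c1 oc by auto
qed

lemma LB:
  assumes "sg V E" "\<And>a b. E a b \<Longrightarrow> phi a b \<noteq> 0"
  shows "2 * int (card V) - 2 * cyclomatic V E - 2 * int (indep_num V E) \<le> int (gain_rank V E phi)"
  using assms
proof (induction "card V" arbitrary: V E rule: less_induct)
  case less
  note G = less.prems(1) and nz = less.prems(2)
  have fin: "finite V" using sg_finite[OF G] .
  show ?case
  proof (cases "V = {}")
    case True
    then show ?thesis by (simp add: cyc_empty)
  next
    case False
    obtain x where x: "x \<in> V" "on_cycle V E x \<or> card {w \<in> V. E x w} \<le> 1"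
      using long_path[OF G False] by blast
    let ?V1 = "V - {x}" let ?E1 = "induced E (V - {x})"
    have G1: "sg ?V1 ?E1" using sg_induced[OF G] by blast
    have nz1: "\<And>a b. ?E1 a b \<Longrightarrow> phi a b \<noteq> 0" using nz by (simp add: induced_def)
    have cV: "card V = card ?V1 + 1" using card_Suc_Diff1[OF fin x(1)] by simp
    have IH1: "2 * int (card ?V1) - 2 * cyclomatic ?V1 ?E1 - 2 * int (indep_num ?V1 ?E1) \<le> int (gain_rank ?V1 ?E1 phi)"
      using less.hyps[of ?V1 ?E1] cV G1 nz1 by simp
    have r1: "gain_rank ?V1 ?E1 phi \<le> gain_rank V E phi" using rank_mono[OF G] by blast
    have a1: "indep_num ?V1 ?E1 \<le> indep_num V E" using indep_mono[OF fin] by blast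
    show ?thesis
    proof (cases "on_cycle V E x")
      case True
      have "cyclomatic ?V1 ?E1 < cyclomatic V E" using cyc_lt[OF G x(1) True] .
      then show ?thesis using IH1 r1 a1 cV by linarith
    next
      case False
      then have small: "card {w \<in> V. E x w} \<le> 1" using x(2) by blast
      have c1: "cyclomatic ?V1 ?E1 = cyclomatic V E" using cyc_eq[OF G x(1) False] .
      show ?thesis
      proof (cases "card {w \<in> V. E x w} = 0")
        case True
        have "{w \<in> V. E x w} = {}" using True fin by simp
        then have iso: "\<And>w. \<not> E x w" using sgV[OF G] by blast
        have "indep_num ?V1 ?E1 + 1 \<le> indep_num V E" using indep_isolated[OF G x(1) iso] .
        then show ?thesis using IH1 r1 c1 cV by linarith
      next
        case False
        then have "card {w \<in> V. E x w} = 1" using small by simp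
        then obtain v where Nx: "{w \<in> V. E x w} = {v}" using card_1_singletonE by blast
        have xv: "E x v" using Nx by blast
        have px: "\<And>w. E x w \<Longrightarrow> w = v" using Nx sgV[OF G] by blast
        let ?V0 = "V - {x, v}" let ?E0 = "induced E (V - {x, v})"
        have uV: "x \<noteq> v" "v \<in> V" using sgV[OF G xv] by auto
        have G0: "sg ?V0 ?E0" using sg_induced[OF G] by blast
        have nz0: "\<And>a b. ?E0 a b \<Longrightarrow> phi a b \<noteq> 0" using nz by (simp add: induced_def)
        have cV0: "card V = card ?V0 + 2"
        proof -
          have "card ?V0 = card V - card {x, v}" using fin x(1) uV by (intro card_Diff_subset) auto
          moreover have "card {x, v} = 2" using uV by simp
          moreover have "card {x, v} \<le> card V" using fin x(1) uV by (intro card_mono) auto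
          ultimately show ?thesis by simp
        qed
        have IH0: "2 * int (card ?V0) - 2 * cyclomatic ?V0 ?E0 - 2 * int (indep_num ?V0 ?E0) \<le> int (gain_rank ?V0 ?E0 phi)"
          using less.hyps[of ?V0 ?E0] cV0 G0 nz0 by simp
        have r0: "gain_rank V E phi = gain_rank ?V0 ?E0 phi + 2" using rank_pendant[OF G nz xv px] .
        have a0: "indep_num V E = indep_num ?V0 ?E0 + 1" using indep_pendant[OF G xv px] .
        have c0: "cyclomatic ?V0 ?E0 \<le> cyclomatic V E" using pendant_cyc(1)[OF G xv px] .
        show ?thesis using IH0 r0 a0 c0 cV0 by linarith
      qed
    qed
  qed
qed

theorem lemma4p6:
  fixes V :: "'a set" and E :: "'a \<Rightarrow> 'a \<Rightarrow> bool" and phi :: "'a \<Rightarrow> 'a \<Rightarrow> complex"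
    and u v :: 'a
  assumes "cug_graph V E phi"
    and "pendant V E u" and "E u v"
  defines "V0 \<equiv> V - {u, v}"
  defines "E0 \<equiv> induced E V0"
  shows "int (gain_rank V E phi) = 2 * int (card V) - 2 * cyclomatic V E - 2 * int (indep_num V E)
     \<longleftrightarrow> (\<not> on_cycle V E v \<and>
          int (gain_rank V0 E0 phi) = 2 * int (card V0) - 2 * cyclomatic V0 E0 - 2 * int (indep_num V0 E0))"
proof -
  have cg: "finite V \<and> (\<forall>x y. E x y \<longrightarrow> x \<in> V \<and> y \<in> V \<and> x \<noteq> y \<and> E y x) \<and>
     (\<forall>x y. E x y \<longrightarrow> cmod (phi x y) = 1 \<and> phi y x = cnj (phi x y))"
    using assms(1) unfolding cug_graph_def .
  have G: "sg V E" unfolding sg_def using cg[THEN conjunct1] cg[THEN conjunct2, THEN conjunct1] by (rule conjI)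
  have nz: "\<And>a b. E a b \<Longrightarrow> phi a b \<noteq> 0"
  proof
    fix a b assume ab: "E a b" "phi a b = 0"
    have "cmod (phi a b) = 1" using cg[THEN conjunct2, THEN conjunct2] ab(1) by blast
    then show False using ab(2) by simp
  qed
  have fin: "finite V" using sg_finite[OF G] .
  have uV: "u \<in> V" "v \<in> V" "u \<noteq> v" using sgV[OF G assms(3)] by auto
  have "card {w \<in> V. E u w} = 1" using assms(2) by (simp add: pendant_def)
  then obtain v' where Nu: "{w \<in> V. E u w} = {v'}" using card_1_singletonE by blast
  have "v \<in> {w \<in> V. E u w}" using uV assms(3) by blast
  then have "v = v'" unfolding Nu by simp
  have pu: "w = v" if "E u w" for w
  proof -
    have "w \<in> {w \<in> V. E u w}" using that sgV[OF G that] by simp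
    then show ?thesis unfolding Nu using \<open>v = v'\<close> by simp
  qed
  have G0: "sg V0 E0" unfolding V0_def E0_def using sg_induced[OF G] by blast
  have nz0: "\<And>a b. E0 a b \<Longrightarrow> phi a b \<noteq> 0" using nz by (simp add: E0_def induced_def)
  have cV0: "card V = card V0 + 2"
  proof -
    have "card V0 = card V - card {u, v}" unfolding V0_def using fin uV by (intro card_Diff_subset) auto
    moreover have "card {u, v} = 2" using uV by simp
    moreover have "card {u, v} \<le> card V" using fin uV by (intro card_mono) auto
    ultimately show ?thesis by simp
  qed
  have r0: "gain_rank V E phi = gain_rank V0 E0 phi + 2"
    unfolding V0_def E0_def using rank_pendant[OF G nz assms(3) pu] .
  have a0: "indep_num V E = indep_num V0 E0 + 1"
    unfolding V0_def E0_def using indep_pendant[OF G assms(3) pu] .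
  have c0: "cyclomatic V0 E0 \<le> cyclomatic V E"
    unfolding V0_def E0_def using pendant_cyc(1)[OF G assms(3) pu] .
  have c0e: "cyclomatic V0 E0 = cyclomatic V E \<longleftrightarrow> \<not> on_cycle V E v"
    unfolding V0_def E0_def using pendant_cyc(2)[OF G assms(3) pu] .
  have lb: "2 * int (card V0) - 2 * cyclomatic V0 E0 - 2 * int (indep_num V0 E0) \<le> int (gain_rank V0 E0 phi)"
    using LB[OF G0 nz0] .
  show ?thesis
  proof (cases "on_cycle V E v")
    case True
    then have "cyclomatic V0 E0 < cyclomatic V E" using c0 c0e by auto
    then show ?thesis using True lb r0 a0 cV0 by linarith
  next
    case False
    then have "cyclomatic V0 E0 = cyclomatic V E" using c0e by auto
    then show ?thesis using False r0 a0 cV0 by linarith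
  qed
qed

end
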